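(* Let $\mathbf{X}$ be an $\mathbf{I}$-separated structure with universe $X$ and let $\{L,U\}$ be a partition of $X$. Then the characteristic function of $U$ is a homomorphism from $\mathbf{X}$ into $\mathbf{I}$ if and only if for every finite $s\subseteq U$ and every finite $t\subseteq L$ we have $s\not\sqsubseteq t$.
   Context: $\mathbf{I}$ is the structure with universe $\{0,1\}$ and, for all $n,m\in\mathbb N$ (including $0$), an $(n+m)$-ary relation $I_{n,m}$ given by $I_{n,m}(a_0,\dots,a_{n-1},b_0,\dots,b_{m-1})\iff \min_{i<n}a_i\le\max_{j<m}b_j$, with $\min\emptyset=1$, $\max\emptyset=0$. A structure is $\mathbf{I}$-separated if it embeds into some power of $\mathbf{I}$. For a structure in the language $\{I_{n,m}\}$ and finite subsets $a=\{s_0,\dots,s_{n-1}\}$, $b=\{t_0,\dots,t_{m-1}\}$ of its universe, $a\sqsubseteq b$ means $I_{n,m}(s_0,\dots,s_{n-1},t_0,\dots,t_{m-1})$. A homomorphism into $\mathbf{I}$ is a map preserving all $I_{n,m}$. *)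

theory Defs
  imports Main
begin

text \<open>A structure in the language of the relation symbols I_{n,m} (n, m natural numbers)
is a universe X together with an interpretation rel, where I_{n,m}(a_0..a_{n-1},b_0..b_{m-1})
holds iff rel [a_0,..,a_{n-1}] [b_0,..,b_{m-1}] (n and m are the lengths of the two lists).
Only lists with entries in X are relevant.\<close>

definition I_rel :: "nat list \<Rightarrow> nat list \<Rightarrow> bool" where
  "I_rel as bs \<longleftrightarrow>
     (if as = [] then 1 else Min (set as)) \<le> (if bs = [] then 0 else Max (set bs))"

definition I_univ :: "nat set" where
  "I_univ = {0, 1}"

definition hom_into_I :: "'a set \<Rightarrow> ('a list \<Rightarrow> 'a list \<Rightarrow> bool) \<Rightarrow> ('a \<Rightarrow> nat) \<Rightarrow> bool" where
  "hom_into_I X rel h \<longleftrightarrow>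
     (\<forall>x\<in>X. h x \<in> I_univ) \<and>
     (\<forall>as bs. set as \<subseteq> X \<longrightarrow> set bs \<subseteq> X \<longrightarrow> rel as bs \<longrightarrow> I_rel (map h as) (map h bs))"

text \<open>Embedding of (X, rel) into the power I^K (K an index set): elements of I^K are maps
K \<rightarrow> {0,1}, relations are interpreted coordinatewise.\<close>
definition embeds_into_I_power ::
  "'a set \<Rightarrow> ('a list \<Rightarrow> 'a list \<Rightarrow> bool) \<Rightarrow> 'k set \<Rightarrow> ('a \<Rightarrow> 'k \<Rightarrow> nat) \<Rightarrow> bool" where
  "embeds_into_I_power X rel K f \<longleftrightarrow>
     (\<forall>x\<in>X. \<forall>k\<in>K. f x k \<in> I_univ) \<and>
     (\<forall>x\<in>X. \<forall>y\<in>X. (\<forall>k\<in>K. f x k = f y k) \<longrightarrow> x = y) \<and>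
     (\<forall>as bs. set as \<subseteq> X \<longrightarrow> set bs \<subseteq> X \<longrightarrow>
        (rel as bs \<longleftrightarrow> (\<forall>k\<in>K. I_rel (map (\<lambda>x. f x k) as) (map (\<lambda>x. f x k) bs))))"

text \<open>I-separated: embeds into some power of I.  The index set ranges over sets of an
arbitrary type 'k; since the theorem is universally quantified over 'k, this is faithful.\<close>
definition I_separated :: "'k itself \<Rightarrow> 'a set \<Rightarrow> ('a list \<Rightarrow> 'a list \<Rightarrow> bool) \<Rightarrow> bool" where
  "I_separated _ X rel \<longleftrightarrow> (\<exists>(K::'k set) f. embeds_into_I_power X rel K f)"

definition sqle :: "('a list \<Rightarrow> 'a list \<Rightarrow> bool) \<Rightarrow> 'a set \<Rightarrow> 'a set \<Rightarrow> bool" where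
  "sqle rel s t \<longleftrightarrow>
     (\<exists>as bs. distinct as \<and> set as = s \<and> distinct bs \<and> set bs = t \<and> rel as bs)"

end

theory Submission
  imports Defs
begin

lemma I_rel_remdups:
  "I_rel (map g (remdups as)) (map g (remdups bs)) = I_rel (map g as) (map g bs)"
  unfolding I_rel_def by (simp add: remdups_eq_nil_iff)

theorem mainTheorem6:
  fixes X L U :: "'a set" and rel :: "'a list \<Rightarrow> 'a list \<Rightarrow> bool"
  assumes sep: "I_separated TYPE('k) X rel"
    and part: "L \<union> U = X" "L \<inter> U = {}"
  shows "hom_into_I X rel (\<lambda>x. if x \<in> U then 1 else 0) \<longleftrightarrow>
         (\<forall>s t. finite s \<longrightarrow> s \<subseteq> U \<longrightarrow> finite t \<longrightarrow> t \<subseteq> L \<longrightarrow> \<not> sqle rel s t)"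
proof
  assume h: "hom_into_I X rel (\<lambda>x. if x \<in> U then 1 else 0)"
  show "\<forall>s t. finite s \<longrightarrow> s \<subseteq> U \<longrightarrow> finite t \<longrightarrow> t \<subseteq> L \<longrightarrow> \<not> sqle rel s t"
  proof (intro allI impI notI)
    fix s t assume "finite s" "s \<subseteq> U" "finite t" "t \<subseteq> L" "sqle rel s t"
    then obtain as bs where ab: "set as = s" "set bs = t" "rel as bs"
      unfolding sqle_def by blast
    have "set as \<subseteq> X" "set bs \<subseteq> X" using ab \<open>s \<subseteq> U\<close> \<open>t \<subseteq> L\<close> part by auto
    with h ab have r: "I_rel (map (\<lambda>x. if x \<in> U then 1 else 0) as) (map (\<lambda>x. if x \<in> U then 1 else 0) bs)"
      unfolding hom_into_I_def by blast
    have m1: "map (\<lambda>x. if x \<in> U then 1 else 0) as = map (\<lambda>_. 1::nat) as"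
      using ab \<open>s \<subseteq> U\<close> by (auto intro: map_cong)
    have m2: "map (\<lambda>x. if x \<in> U then 1 else 0) bs = map (\<lambda>_. 0::nat) bs"
      using ab \<open>t \<subseteq> L\<close> part(2) by (auto intro: map_cong)
    show False using r unfolding m1 m2 I_rel_def by (auto split: if_splits)
  qed
next
  assume H: "\<forall>s t. finite s \<longrightarrow> s \<subseteq> U \<longrightarrow> finite t \<longrightarrow> t \<subseteq> L \<longrightarrow> \<not> sqle rel s t"
  obtain K :: "'k set" and f where emb: "embeds_into_I_power X rel K f"
    using sep unfolding I_separated_def by blast
  show "hom_into_I X rel (\<lambda>x. if x \<in> U then 1 else 0)"
    unfolding hom_into_I_def
  proof (intro conjI allI impI)
    show "\<forall>x\<in>X. (if x \<in> U then 1 else 0) \<in> I_univ" by (simp add: I_univ_def)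
  next
    fix as bs assume X: "set as \<subseteq> X" "set bs \<subseteq> X" and r: "rel as bs"
    show "I_rel (map (\<lambda>x. if x \<in> U then 1 else 0) as) (map (\<lambda>x. if x \<in> U then 1 else 0) bs)"
    proof (rule ccontr)
      assume nI: "\<not> ?thesis"
      have sU: "set as \<subseteq> U"
      proof
        fix x assume x: "x \<in> set as"
        show "x \<in> U"
        proof (rule ccontr)
          assume "x \<notin> U"
          hence "0 \<in> set (map (\<lambda>x. if x \<in> U then 1 else 0::nat) as)" using x by force
          hence "Min (set (map (\<lambda>x. if x \<in> U then 1 else 0::nat) as)) = 0"
            by (meson List.finite_set Min_le le_zero_eq)
          thus False using nI x unfolding I_rel_def by (auto split: if_splits)
        qed
      qed
      have tL: "set bs \<subseteq> L"
      proof
        fix x assume x: "x \<in> set bs"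
        show "x \<in> L"
        proof (rule ccontr)
          assume "x \<notin> L"
          hence xU: "x \<in> U" using x X part by auto
          hence "1 \<in> set (map (\<lambda>x. if x \<in> U then 1 else 0::nat) bs)" using x by force
          hence "Max (set (map (\<lambda>x. if x \<in> U then 1 else 0::nat) bs)) \<ge> 1"
            by (meson List.finite_set Max_ge)
          moreover have "(if as = [] then 1 else Min (set (map (\<lambda>x. if x \<in> U then 1 else 0::nat) as))) \<le> 1"
          proof (cases "as = []")
            case False
            then obtain y where "y \<in> set as" by (cases as) auto
            hence "(if y \<in> U then 1 else 0::nat) \<in> set (map (\<lambda>x. if x \<in> U then 1 else 0::nat) as)" by force
            hence "Min (set (map (\<lambda>x. if x \<in> U then 1 else 0::nat) as)) \<le> (if y \<in> U then 1 else 0)"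
              using Min_le[OF List.finite_set] by blast
            with False show ?thesis by (auto split: if_splits)
          qed simp
          ultimately show False using nI x unfolding I_rel_def by (auto split: if_splits)
        qed
      qed
      have "rel (remdups as) (remdups bs)"
        using emb X r unfolding embeds_into_I_power_def
        by (simp add: I_rel_remdups)
      hence "sqle rel (set as) (set bs)" unfolding sqle_def
        by (metis distinct_remdups set_remdups)
      thus False using H sU tL by blast
    qed
  qed
qed

end
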